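(* Let $E$ be a finite set and $\mathcal{O}\subseteq\{+,-,0\}^E$ satisfy (O3): $X,Y\in\mathcal{O}\Rightarrow X\circ Y\in\mathcal{O}$. Then $\mathcal{O}$ satisfies (O4) if and only if it satisfies (O4'), where (O4): if $X,Y\in\mathcal{O}$ with $\underline{X}=\underline{Y}$ and $X\neq Y$, then $I_e(X,Y)\cap\mathcal{O}\neq\emptyset$ for all $e\in S(X,Y)$; (O4'): if $X,Y\in\mathcal{O}$ with $\underline{X}=\underline{Y}$ and $X\neq Y$, then $I(X,Y)\cap\mathcal{O}\neq\emptyset$.
   Context: For $X\in\{+,-,0\}^E$: support $\underline{X}=\{e:X_e\neq0\}$; composition $(X\circ Y)_e=X_e$ if $X_e\neq0$, else $Y_e$; separation set $S(X,Y)=\{e: X_e,Y_e\neq0, X_e\neq Y_e\}$. For $X,Y$ with $\underline{X}=\underline{Y}$, $X\neq Y$ and $e\in S(X,Y)$: $I_e(X,Y)=\{V\in\{+,-,0\}^E : \underline{V}\subseteq\underline{X}\setminus\{e\},\ V_f=X_f\ \forall f\notin S(X,Y)\}$ and $I(X,Y)=\bigcup_{e\in S(X,Y)}I_e(X,Y)$. *)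

theory Defs
  imports Main
begin

datatype sign = Pos | Neg | Zero

type_synonym 'e covector = "'e \<Rightarrow> sign"

definition supp :: "'e covector \<Rightarrow> 'e set" where
  "supp X = {e. X e \<noteq> Zero}"

definition comp :: "'e covector \<Rightarrow> 'e covector \<Rightarrow> 'e covector" where
  "comp X Y = (\<lambda>e. if X e \<noteq> Zero then X e else Y e)"

definition sep :: "'e covector \<Rightarrow> 'e covector \<Rightarrow> 'e set" where
  "sep X Y = {e. X e \<noteq> Zero \<and> Y e \<noteq> Zero \<and> X e \<noteq> Y e}"

definition Ie :: "'e \<Rightarrow> 'e covector \<Rightarrow> 'e covector \<Rightarrow> 'e covector set" where
  "Ie e X Y = {V. supp V \<subseteq> supp X - {e} \<and> (\<forall>f. f \<notin> sep X Y \<longrightarrow> V f = X f)}"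

definition I_all :: "'e covector \<Rightarrow> 'e covector \<Rightarrow> 'e covector set" where
  "I_all X Y = (\<Union>e\<in>sep X Y. Ie e X Y)"

definition O3 :: "'e covector set \<Rightarrow> bool" where
  "O3 \<O> \<longleftrightarrow> (\<forall>X\<in>\<O>. \<forall>Y\<in>\<O>. comp X Y \<in> \<O>)"

definition O4 :: "'e covector set \<Rightarrow> bool" where
  "O4 \<O> \<longleftrightarrow> (\<forall>X\<in>\<O>. \<forall>Y\<in>\<O>. supp X = supp Y \<and> X \<noteq> Y \<longrightarrow>
      (\<forall>e\<in>sep X Y. Ie e X Y \<inter> \<O> \<noteq> {}))"

definition O4' :: "'e covector set \<Rightarrow> bool" where
  "O4' \<O> \<longleftrightarrow> (\<forall>X\<in>\<O>. \<forall>Y\<in>\<O>. supp X = supp Y \<and> X \<noteq> Y \<longrightarrow>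
      I_all X Y \<inter> \<O> \<noteq> {})"

end

theory Submission
  imports Defs
begin

lemma agree_out: assumes "supp X = supp Y" "g \<notin> sep X Y" shows "X g = Y g"
proof -
  have "g \<in> supp X \<longleftrightarrow> g \<in> supp Y" using assms(1) by simp
  then have "X g = Zero \<longleftrightarrow> Y g = Zero" unfolding supp_def by simp
  thus ?thesis using assms(2) unfolding sep_def by (cases "X g"; cases "Y g") auto
qed

lemma suppD: assumes "supp X = supp Y" shows "X g = Zero \<longleftrightarrow> Y g = Zero"
proof -
  have "g \<in> supp X \<longleftrightarrow> g \<in> supp Y" using assms by simp
  then show ?thesis unfolding supp_def by simp
qed

lemma supp_eqI: "(\<And>g. X g = Zero \<longleftrightarrow> Y g = Zero) \<Longrightarrow> supp X = supp Y"
  unfolding supp_def by auto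

lemma Ie_mono:
  assumes "supp A = supp X" "sep A B \<subseteq> sep X Y" "\<And>g. g \<notin> sep X Y \<Longrightarrow> A g = X g"
  shows "Ie e A B \<subseteq> Ie e X Y"
proof
  fix V assume "V \<in> Ie e A B"
  then have 1: "supp V \<subseteq> supp A - {e}" and 2: "\<And>f. f \<notin> sep A B \<Longrightarrow> V f = A f"
    unfolding Ie_def by auto
  have "\<And>f. f \<notin> sep X Y \<Longrightarrow> V f = X f"
  proof -
    fix f assume f: "f \<notin> sep X Y"
    have "f \<notin> sep A B" by (rule contra_subsetD[OF assms(2) f])
    then have "V f = A f" by (rule 2)
    also have "\<dots> = X f" using f by (rule assms(3))
    finally show "V f = X f" .
  qed
  then show "V \<in> Ie e X Y" using 1 unfolding Ie_def assms(1) by simp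
qed

lemma main:
  fixes \<O> :: "('e::finite) covector set"
  assumes O3: "O3 \<O>" and O4': "O4' \<O>"
  shows "\<And>X Y e. card (sep X Y) = n \<Longrightarrow> X \<in> \<O> \<Longrightarrow> Y \<in> \<O> \<Longrightarrow> supp X = supp Y \<Longrightarrow>
     e \<in> sep X Y \<Longrightarrow> Ie e X Y \<inter> \<O> \<noteq> {}"
proof (induction n rule: less_induct)
  case (less n X Y e)
  have XY: "X \<noteq> Y" using less.prems(5) unfolding sep_def by auto
  obtain f V where f: "f \<in> sep X Y" and V: "V \<in> Ie f X Y" "V \<in> \<O>"
  proof -
    have "I_all X Y \<inter> \<O> \<noteq> {}" using O4' less.prems(2,3,4) XY unfolding O4'_def by blast
    then show ?thesis using that unfolding I_all_def by blast
  qed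
  have Vf: "V f = Zero" using V(1) unfolding Ie_def supp_def by blast
  have Vsupp: "\<And>g. V g \<noteq> Zero \<Longrightarrow> X g \<noteq> Zero" using V(1) unfolding Ie_def supp_def by blast
  have Vout: "\<And>g. g \<notin> sep X Y \<Longrightarrow> V g = X g" using V(1) unfolding Ie_def by blast
  have out: "\<And>g. g \<notin> sep X Y \<Longrightarrow> X g = Y g" by (rule agree_out[OF less.prems(4)])
  have fin: "finite (sep X Y)" by simp
  have zz: "\<And>g. X g = Zero \<longleftrightarrow> Y g = Zero" by (rule suppD[OF less.prems(4)])
  show ?case
  proof (cases "V e = Zero")
    case True
    then have "V \<in> Ie e X Y" using V(1) unfolding Ie_def supp_def by auto
    then show ?thesis using V(2) by blast
  next
    case False
    then have "X e \<noteq> Zero" using Vsupp by blast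
    have eX: "X e \<noteq> Zero" "Y e \<noteq> Zero" "X e \<noteq> Y e" using less.prems(5) unfolding sep_def by auto
    show ?thesis
    proof (cases "V e = X e")
      case True
      define W where "W = comp V Y"
      have WO: "W \<in> \<O>" using O3 V(2) less.prems(3) unfolding O3_def W_def by blast
      have Wsupp: "supp W = supp Y"
        by (rule supp_eqI) (use Vsupp zz in \<open>auto simp: W_def comp_def\<close>)
      have sub: "sep W Y \<subseteq> sep X Y - {f}"
      proof
        fix g assume g: "g \<in> sep W Y"
        then have Vg: "V g \<noteq> Zero" and ne: "V g \<noteq> Y g"
          unfolding W_def comp_def sep_def by (auto split: if_splits)
        have "g \<noteq> f" using Vg Vf by auto
        moreover have "g \<in> sep X Y" using Vout out ne by metis
        ultimately show "g \<in> sep X Y - {f}" by blast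
      qed
      have Wout: "\<And>g. g \<notin> sep X Y \<Longrightarrow> W g = X g"
        using Vout out unfolding W_def comp_def by (metis (full_types))
      have eW: "e \<in> sep W Y" using True False eX unfolding W_def comp_def sep_def by auto
      have "sep W Y \<subset> sep X Y" using sub f by blast
      then have "card (sep W Y) < n"
        using psubset_card_mono[OF fin] less.prems(1) by simp
      then have "Ie e W Y \<inter> \<O> \<noteq> {}" using less.IH[OF _ refl WO less.prems(3) Wsupp eW] by simp
      moreover have "Ie e W Y \<subseteq> Ie e X Y"
        by (rule Ie_mono) (use Wsupp less.prems(4) sub Wout in auto)
      ultimately show ?thesis by blast
    next
      case False
      define W where "W = comp V X"
      have WO: "W \<in> \<O>" using O3 V(2) less.prems(2) unfolding O3_def W_def by blast
      have Wsupp: "supp W = supp X"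
        by (rule supp_eqI) (use Vsupp in \<open>auto simp: W_def comp_def\<close>)
      have sub: "sep W X \<subseteq> sep X Y - {f}"
      proof
        fix g assume g: "g \<in> sep W X"
        then have Vg: "V g \<noteq> Zero" and ne: "V g \<noteq> X g"
          unfolding W_def comp_def sep_def by (auto split: if_splits)
        have "g \<noteq> f" using Vg Vf by auto
        moreover have "g \<in> sep X Y" using Vout ne by metis
        ultimately show "g \<in> sep X Y - {f}" by blast
      qed
      have Wout: "\<And>g. g \<notin> sep X Y \<Longrightarrow> W g = X g"
        using Vout out unfolding W_def comp_def by (metis (full_types))
      have eW: "e \<in> sep W X" using False \<open>V e \<noteq> Zero\<close> eX unfolding W_def comp_def sep_def by auto
      have "sep W X \<subset> sep X Y" using sub f by blast
      then have "card (sep W X) < n"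
        using psubset_card_mono[OF fin] less.prems(1) by simp
      then have "Ie e W X \<inter> \<O> \<noteq> {}" using less.IH[OF _ refl WO less.prems(2) Wsupp eW] by simp
      moreover have "Ie e W X \<subseteq> Ie e X Y"
        by (rule Ie_mono) (use Wsupp sub Wout in auto)
      ultimately show ?thesis by blast
    qed
  qed
qed

theorem lemma2p1:
  fixes \<O> :: "('e::finite) covector set"
  assumes "O3 \<O>"
  shows "O4 \<O> \<longleftrightarrow> O4' \<O>"
proof
  assume h: "O4 \<O>"
  show "O4' \<O>" unfolding O4'_def
  proof (intro ballI impI)
    fix X Y assume X: "X \<in> \<O>" and Y: "Y \<in> \<O>" and XY: "supp X = supp Y \<and> X \<noteq> Y"
    have "X \<noteq> Y" using XY by simp
    have "\<exists>g. X g \<noteq> Y g"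
    proof (rule ccontr)
      assume "\<not> (\<exists>g. X g \<noteq> Y g)"
      then have "X = Y" by (intro ext) simp
      with \<open>X \<noteq> Y\<close> show False by contradiction
    qed
    then obtain g where g: "X g \<noteq> Y g" by (elim exE)
    have "X g = Zero \<longleftrightarrow> Y g = Zero" by (rule suppD) (use XY in simp)
    with g have gs: "g \<in> sep X Y" unfolding sep_def by auto
    have "\<forall>e\<in>sep X Y. Ie e X Y \<inter> \<O> \<noteq> {}" using bspec[OF bspec[OF h[unfolded O4_def] X] Y] XY by simp
    then have "Ie g X Y \<inter> \<O> \<noteq> {}" using gs by blast
    moreover have "Ie g X Y \<subseteq> I_all X Y" unfolding I_all_def using gs by blast
    ultimately show "I_all X Y \<inter> \<O> \<noteq> {}" by blast
  qed
next
  assume h: "O4' \<O>"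
  show "O4 \<O>" unfolding O4_def
  proof (intro ballI impI)
    fix X Y e assume X: "X \<in> \<O>" and Y: "Y \<in> \<O>" and XY: "supp X = supp Y \<and> X \<noteq> Y"
      and e: "e \<in> sep X Y"
    show "Ie e X Y \<inter> \<O> \<noteq> {}"
      by (rule main[OF assms h refl X Y _ e]) (use XY in simp)
  qed
qed

end
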